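(* Let $(V,\Omega)$ be a finite-dimensional real symplectic vector space and let $A:V\to V$ be a linear map with $\Omega(Ax,y)+\Omega(x,Ay)=0$ for all $x,y\in V$ and $A^2=-I$. Let $\theta^A$ be the one-form on $V$ given by $\theta^A_z(v_z)=\frac{1}{2}\Omega(z-Az,v)$. Then ${\rm Aut}(V,\theta^A)=\{g\in{\rm Sp}(V,\Omega): gA=Ag\}$, where ${\rm Aut}(V,\theta^A)$ is the group of all diffeomorphisms $g:V\to V$ satisfying $g^*\theta^A=\theta^A$.
   Context: $V$ is a finite-dimensional real vector space and $\Omega$ a nonsingular alternating bilinear form on $V$. For $z,v\in V$, $v_z\in T_zV$ denotes the tangent vector at $z$ corresponding to $v$ under the canonical identification $T_zV\cong V$. Equivalently, $\theta^A=\theta^0+d\psi^A$ where $\theta^0_z(v_z)=\frac12\Omega(z,v)$ and $\psi^A(z)=\frac14\Omega(z,Az)$. For a smooth map $g:V\to V$, $(g^*\theta^A)_z(v_z)=\frac12\Omega(g(z)-Ag(z),g'_z v)$, where $g'_z$ is the derivative of $g$ at $z$. ${\rm Sp}(V,\Omega)$ is the group of linear automorphisms of $V$ preserving $\Omega$. *)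

theory Defs
  imports "HOL-Analysis.Analysis"
begin

coinductive smooth :: "('a::euclidean_space \<Rightarrow> 'b::euclidean_space) \<Rightarrow> bool" where
  "(\<forall>x. f differentiable (at x)) \<Longrightarrow>
   (\<forall>v. smooth (\<lambda>x. frechet_derivative f (at x) v)) \<Longrightarrow> smooth f"

definition diffeomorphism :: "('a::euclidean_space \<Rightarrow> 'a) \<Rightarrow> bool" where
  "diffeomorphism g \<longleftrightarrow> bij g \<and> smooth g \<and> smooth (inv g)"

text \<open>One-forms on V are represented as maps z \<mapsto> (v \<mapsto> \<theta>_z(v_z)).\<close>
type_synonym 'a one_form = "'a \<Rightarrow> 'a \<Rightarrow> real"

definition pullback :: "('a::euclidean_space \<Rightarrow> 'a) \<Rightarrow> 'a one_form \<Rightarrow> 'a one_form" where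
  "pullback g \<theta> = (\<lambda>z v. \<theta> (g z) (frechet_derivative g (at z) v))"

definition theta_A :: "('a::euclidean_space \<Rightarrow> 'a \<Rightarrow> real) \<Rightarrow> ('a \<Rightarrow> 'a) \<Rightarrow> 'a one_form" where
  "theta_A \<Omega> A = (\<lambda>z v. 1/2 * \<Omega> (z - A z) v)"

definition symplectic_form :: "('a::euclidean_space \<Rightarrow> 'a \<Rightarrow> real) \<Rightarrow> bool" where
  "symplectic_form \<Omega> \<longleftrightarrow> bilinear \<Omega> \<and> (\<forall>x. \<Omega> x x = 0) \<and>
     (\<forall>x. (\<forall>y. \<Omega> x y = 0) \<longrightarrow> x = 0)"

definition Sp :: "('a::euclidean_space \<Rightarrow> 'a \<Rightarrow> real) \<Rightarrow> ('a \<Rightarrow> 'a) set" where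
  "Sp \<Omega> = {g. linear g \<and> bij g \<and> (\<forall>x y. \<Omega> (g x) (g y) = \<Omega> x y)}"

definition Aut :: "'a::euclidean_space one_form \<Rightarrow> ('a \<Rightarrow> 'a) set" where
  "Aut \<theta> = {g. diffeomorphism g \<and> pullback g \<theta> = \<theta>}"

end

theory Submission
  imports Defs
begin

lemma mixed_aux:
  fixes f :: "'a::euclidean_space \<Rightarrow> real"
  assumes d1: "\<And>x. (f has_derivative f' x) (at x)"
    and d2: "\<And>x w. ((\<lambda>x. f' x w) has_derivative f'' x w) (at x)"
    and h: "h > 0"
  shows "\<exists>s t. 0<s \<and> s<h \<and> 0<t \<and> t<h \<and>
    f (z + h *\<^sub>R u + h *\<^sub>R v) - f (z + h *\<^sub>R u) - f (z + h *\<^sub>R v) + f z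
      = h * h * f'' (z + s *\<^sub>R u + t *\<^sub>R v) u v"
proof -
  have lin1: "linear (f' x)" for x using d1[of x] has_derivative_linear by blast
  have lin2: "linear (f'' x w)" for x w using d2[of w x] has_derivative_linear by blast
  define p where "p s = f (z + s *\<^sub>R u + h *\<^sub>R v) - f (z + s *\<^sub>R u)" for s
  have pd: "(p has_derivative (\<lambda>d. f' (z + s *\<^sub>R u + h *\<^sub>R v) (d *\<^sub>R u) - f' (z + s *\<^sub>R u) (d *\<^sub>R u))) (at s within {0..h})" for s
  proof -
    have a: "((\<lambda>s. z + s *\<^sub>R u + h *\<^sub>R v) has_derivative (\<lambda>d. d *\<^sub>R u)) (at s)"
      by (auto intro!: derivative_eq_intros)
    have b: "((\<lambda>s. z + s *\<^sub>R u) has_derivative (\<lambda>d. d *\<^sub>R u)) (at s)"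
      by (auto intro!: derivative_eq_intros)
    have "(p has_derivative (\<lambda>d. f' (z + s *\<^sub>R u + h *\<^sub>R v) (d *\<^sub>R u) - f' (z + s *\<^sub>R u) (d *\<^sub>R u))) (at s)"
      unfolding p_def
      using has_derivative_diff[OF has_derivative_compose[OF a d1] has_derivative_compose[OF b d1]] .
    then show ?thesis by (rule has_derivative_at_withinI)
  qed
  obtain s where s: "s \<in> {0<..<h}" and ps: "p h - p 0 = f' (z + s *\<^sub>R u + h *\<^sub>R v) ((h - 0) *\<^sub>R u) - f' (z + s *\<^sub>R u) ((h-0) *\<^sub>R u)"
    using mvt_simple[OF h pd] by blast
  define q where "q t = f' (z + s *\<^sub>R u + t *\<^sub>R v) u" for t
  have qd: "(q has_derivative (\<lambda>d. f'' (z + s *\<^sub>R u + t *\<^sub>R v) u (d *\<^sub>R v))) (at t within {0..h})" for t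
  proof -
    have a: "((\<lambda>t. z + s *\<^sub>R u + t *\<^sub>R v) has_derivative (\<lambda>d. d *\<^sub>R v)) (at t)"
      by (auto intro!: derivative_eq_intros)
    show ?thesis unfolding q_def
      by (rule has_derivative_at_withinI) (rule has_derivative_compose[OF a d2])
  qed
  obtain t where t: "t \<in> {0<..<h}" and qt: "q h - q 0 = f'' (z + s *\<^sub>R u + t *\<^sub>R v) u ((h - 0) *\<^sub>R v)"
    using mvt_simple[OF h qd] by blast
  have "f (z + h *\<^sub>R u + h *\<^sub>R v) - f (z + h *\<^sub>R u) - f (z + h *\<^sub>R v) + f z = p h - p 0"
    unfolding p_def by (simp add: algebra_simps)
  also have "\<dots> = h * (q h - q 0)"
    using ps unfolding q_def by (simp add: linear_cmul[OF lin1] algebra_simps)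
  also have "\<dots> = h * h * f'' (z + s *\<^sub>R u + t *\<^sub>R v) u v"
    using qt by (simp add: linear_cmul[OF lin2])
  finally show ?thesis using s t by auto
qed

lemma mixed_sym:
  fixes f :: "'a::euclidean_space \<Rightarrow> real"
  assumes d1: "\<And>x. (f has_derivative f' x) (at x)"
    and d2: "\<And>x w. ((\<lambda>x. f' x w) has_derivative f'' x w) (at x)"
    and c: "\<And>w u. continuous_on UNIV (\<lambda>x. f'' x w u)"
  shows "f'' z u v = f'' z v u"
proof (rule ccontr)
  assume ne: "f'' z u v \<noteq> f'' z v u"
  define e where "e = \<bar>f'' z u v - f'' z v u\<bar> / 2"
  have e: "e > 0" using ne by (simp add: e_def)
  obtain da where da: "da > 0" "\<And>x. dist x z < da \<Longrightarrow> dist (f'' x u v) (f'' z u v) < e"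
    using c[of u v] e unfolding continuous_on_iff by (metis UNIV_I)
  obtain db where db: "db > 0" "\<And>x. dist x z < db \<Longrightarrow> dist (f'' x v u) (f'' z v u) < e"
    using c[of v u] e unfolding continuous_on_iff by (metis UNIV_I)
  define h where "h = min da db / (norm u + norm v + 1)"
  have den: "0 < norm u + norm v + 1" by (smt (verit) norm_ge_zero)
  have hpos: "h > 0" using da db den unfolding h_def by (intro divide_pos_pos) auto
  have close: "dist (z + s *\<^sub>R a + t *\<^sub>R b) z < min da db"
    if "0 < s" "s < h" "0 < t" "t < h" "(norm a + norm b) = (norm u + norm v)" for s t a b
  proof -
    have "dist (z + s *\<^sub>R a + t *\<^sub>R b) z = norm (s *\<^sub>R a + t *\<^sub>R b)" by (simp add: dist_norm)
    also have "\<dots> \<le> s * norm a + t * norm b"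
      using that by (metis abs_of_pos norm_scaleR norm_triangle_ineq)
    also have "\<dots> \<le> h * norm a + h * norm b"
      using that by (intro add_mono mult_right_mono) auto
    also have "\<dots> < min da db"
    proof -
      have "h * (norm u + norm v) < h * (norm u + norm v + 1)" using hpos by simp
      also have "\<dots> = min da db" using den by (simp add: h_def)
      finally show ?thesis using that(5) by (metis distrib_left)
    qed
    finally show ?thesis .
  qed
  obtain s t where st: "0<s" "s<h" "0<t" "t<h" and eq1:
    "f (z + h *\<^sub>R u + h *\<^sub>R v) - f (z + h *\<^sub>R u) - f (z + h *\<^sub>R v) + f z
      = h * h * f'' (z + s *\<^sub>R u + t *\<^sub>R v) u v"
    using mixed_aux[OF d1 d2 hpos] by blast
  obtain s' t' where st': "0<s'" "s'<h" "0<t'" "t'<h" and eq2: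
    "f (z + h *\<^sub>R v + h *\<^sub>R u) - f (z + h *\<^sub>R v) - f (z + h *\<^sub>R u) + f z
      = h * h * f'' (z + s' *\<^sub>R v + t' *\<^sub>R u) v u"
    using mixed_aux[OF d1 d2 hpos] by blast
  have "f (z + h *\<^sub>R v + h *\<^sub>R u) = f (z + h *\<^sub>R u + h *\<^sub>R v)" by (simp add: algebra_simps)
  then have eq: "f'' (z + s *\<^sub>R u + t *\<^sub>R v) u v = f'' (z + s' *\<^sub>R v + t' *\<^sub>R u) v u"
  proof -
    have "h * h * f'' (z + s *\<^sub>R u + t *\<^sub>R v) u v = h * h * f'' (z + s' *\<^sub>R v + t' *\<^sub>R u) v u"
      using eq1 eq2 \<open>f (z + h *\<^sub>R v + h *\<^sub>R u) = _\<close> by linarith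
    then show ?thesis using hpos by simp
  qed
  have 1: "dist (f'' (z + s *\<^sub>R u + t *\<^sub>R v) u v) (f'' z u v) < e"
    using da(2) close[OF st] by simp
  have 2: "dist (f'' (z + s' *\<^sub>R v + t' *\<^sub>R u) v u) (f'' z v u) < e"
    using db(2) close[OF st'] by (simp add: add.commute)
  have aux: "\<And>a b c1 c2::real. \<bar>a - c1\<bar> < \<bar>c1 - c2\<bar> / 2 \<Longrightarrow> \<bar>b - c2\<bar> < \<bar>c1 - c2\<bar> / 2 \<Longrightarrow> a = b \<Longrightarrow> False"
    by (auto simp: abs_if split: if_splits)
  from 1 2 eq show False unfolding e_def dist_real_def by (rule aux)
qed

lemma fd_linear:
  fixes l :: "'a::euclidean_space \<Rightarrow> 'b::euclidean_space"
  assumes "linear l"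
  shows "frechet_derivative l (at x) = l"
proof -
  have "(l has_derivative l) (at x)"
    using assms by (rule linear_imp_has_derivative)
  then show ?thesis by (metis frechet_derivative_at)
qed

lemma smooth_affine:
  assumes "linear l"
  shows "smooth (\<lambda>x. l x + (c::'b::euclidean_space))" 
  using assms
proof (coinduction arbitrary: l c rule: smooth.coinduct)
  case (smooth l c)
  have d: "((\<lambda>x. l x + c) has_derivative l) (at x)" for x
    using smooth by (auto intro!: derivative_eq_intros linear_imp_has_derivative)
  then have "frechet_derivative (\<lambda>x. l x + c) (at x) = l" for x by (metis frechet_derivative_at)
  then show ?case using d
    apply (auto simp: differentiable_def)
    apply (rule exI[of _ "\<lambda>_. 0"])
    apply (auto simp: linear_zero)
    done
qed

lemma smooth_linear: "linear (l::'a::euclidean_space \<Rightarrow> 'b::euclidean_space) \<Longrightarrow> smooth l"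
  using smooth_affine[of l 0] by simp

lemma smooth_D: "smooth g \<Longrightarrow> (\<forall>x. g differentiable at x) \<and> (\<forall>v. smooth (\<lambda>x. frechet_derivative g (at x) v))"
  by (erule smooth.cases) auto

lemma omega_facts:
  fixes \<Omega> :: "'a::euclidean_space \<Rightarrow> 'a \<Rightarrow> real" and A :: "'a \<Rightarrow> 'a"
  assumes "symplectic_form \<Omega>"
    and "linear A"
    and "\<forall>x y. \<Omega> (A x) y + \<Omega> x (A y) = 0"
  shows "\<Omega> (x - A x) y - \<Omega> (y - A y) x = 2 * \<Omega> x y"
proof -
  have bl: "bilinear \<Omega>" using assms(1) by (simp add: symplectic_form_def)
  have anti: "\<Omega> a b = - \<Omega> b a" for a b
  proof -
    have "\<Omega> (a + b) (a + b) = 0" using assms(1) by (simp add: symplectic_form_def)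
    moreover have "\<Omega> a a = 0" "\<Omega> b b = 0" using assms(1) by (auto simp: symplectic_form_def)
    ultimately show ?thesis using bl by (simp add: bilinear_ladd bilinear_radd)
  qed
  have e1: "\<Omega> (A y) x + \<Omega> y (A x) = 0" using assms(3) by blast
  have "\<Omega> (A y) x = \<Omega> (A x) y"
    using e1 anti[of y "A x"] by linarith
  moreover have "\<Omega> (x - A x) y = \<Omega> x y - \<Omega> (A x) y" "\<Omega> (y - A y) x = \<Omega> y x - \<Omega> (A y) x"
    using bl by (auto simp: bilinear_lsub)
  ultimately show ?thesis using anti[of y x] by linarith
qed

lemma theorem3_sup:
  fixes \<Omega> :: "'a::euclidean_space \<Rightarrow> 'a \<Rightarrow> real" and A :: "'a \<Rightarrow> 'a"
  assumes "symplectic_form \<Omega>"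
    and "linear A"
    and g: "g \<in> Sp \<Omega>" "g \<circ> A = A \<circ> g"
  shows "g \<in> Aut (theta_A \<Omega> A)"
proof -
  have bl: "bilinear \<Omega>" using assms(1) by (simp add: symplectic_form_def)
  have lg: "linear g" and bg: "bij g" and sg: "\<And>x y. \<Omega> (g x) (g y) = \<Omega> x y"
    using g by (auto simp: Sp_def)
  have inv: "linear (inv g)" using lg bg by (simp add: bij_is_inj inj_linear_imp_inv_linear)
  have "diffeomorphism g" unfolding diffeomorphism_def
    using bg smooth_linear[OF lg] smooth_linear[OF inv] by simp
  moreover have "pullback g (theta_A \<Omega> A) = theta_A \<Omega> A"
  proof (intro ext)
    fix z v
    have "g z - A (g z) = g (z - A z)" using g(2) lg
      by (metis comp_apply linear_diff)
    then show "pullback g (theta_A \<Omega> A) z v = theta_A \<Omega> A z v"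
      unfolding pullback_def theta_A_def fd_linear[OF lg] by (simp add: sg)
  qed
  ultimately show ?thesis by (simp add: Aut_def)
qed

lemma P_vderiv:
  fixes A :: "'a::euclidean_space \<Rightarrow> 'a"
  assumes linA: "linear A" and AA: "\<forall>x. A (A x) = - x"
  shows "((\<lambda>t. exp t *\<^sub>R (cos t *\<^sub>R z - sin t *\<^sub>R A z)) has_vector_derivative
     (exp t *\<^sub>R (cos t *\<^sub>R z - sin t *\<^sub>R A z) - A (exp t *\<^sub>R (cos t *\<^sub>R z - sin t *\<^sub>R A z)))) (at t)"
proof -
  have c: "((\<lambda>x. cos x *\<^sub>R z) has_vector_derivative (- sin t) *\<^sub>R z) (at t)"
    using has_vector_derivative_scaleR[OF DERIV_cos has_vector_derivative_const[of z]] by simp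
  have s: "((\<lambda>x. sin x *\<^sub>R A z) has_vector_derivative cos t *\<^sub>R A z) (at t)"
    using has_vector_derivative_scaleR[OF DERIV_sin has_vector_derivative_const[of "A z"]] by simp
  have "((\<lambda>t. exp t *\<^sub>R (cos t *\<^sub>R z - sin t *\<^sub>R A z)) has_vector_derivative
     (exp t *\<^sub>R ((- sin t) *\<^sub>R z - cos t *\<^sub>R A z) + exp t *\<^sub>R (cos t *\<^sub>R z - sin t *\<^sub>R A z))) (at t)"
    by (intro has_vector_derivative_scaleR has_vector_derivative_diff DERIV_exp c s)
  moreover have "A (exp t *\<^sub>R (cos t *\<^sub>R z - sin t *\<^sub>R A z)) = exp t *\<^sub>R (cos t *\<^sub>R A z + sin t *\<^sub>R z)"
    using linA AA by (simp add: linear_diff linear_scale scaleR_add_right)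
  ultimately show ?thesis by (simp add: algebra_simps)
qed

lemma lin_vderiv:
  fixes A :: "'a::euclidean_space \<Rightarrow> 'a"
  assumes linA: "linear A" and yd: "(y has_vector_derivative y') (at t)"
  shows "((\<lambda>t. A (y t)) has_vector_derivative A y') (at t)"
proof -
  have bl: "bounded_linear A" using linA by (simp add: linear_conv_bounded_linear)
  have "((\<lambda>t. A (y t)) has_derivative (\<lambda>x. A (x *\<^sub>R y'))) (at t)"
    using bounded_linear.has_derivative[OF bl yd[unfolded has_vector_derivative_def]] .
  then show ?thesis unfolding has_vector_derivative_def using linA by (simp add: linear_scale)
qed

lemma flow_const:
  fixes A :: "'a::euclidean_space \<Rightarrow> 'a"
  assumes linA: "linear A" and AA: "\<forall>x. A (A x) = - x"
    and yd: "\<And>t. (y has_vector_derivative (y t - A (y t))) (at t)"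
  shows "exp (-t) *\<^sub>R (cos t *\<^sub>R y t + sin t *\<^sub>R A (y t)) = y 0"
proof -
  define h where "h t = exp (-t) *\<^sub>R (cos t *\<^sub>R y t + sin t *\<^sub>R A (y t))" for t
  have hd: "(h has_vector_derivative 0) (at t)" for t
  proof -
    have e: "((\<lambda>t. exp (-t)) has_real_derivative (- exp (-t))) (at t)"
      by (auto intro!: derivative_eq_intros)
    have Ay: "((\<lambda>t. A (y t)) has_vector_derivative A (y t - A (y t))) (at t)"
      by (rule lin_vderiv[OF linA yd])
    have "(h has_vector_derivative
      (exp (-t) *\<^sub>R ((cos t *\<^sub>R (y t - A (y t)) + (- sin t) *\<^sub>R y t) + (sin t *\<^sub>R A (y t - A (y t)) + cos t *\<^sub>R A (y t)))
       + (- exp (-t)) *\<^sub>R (cos t *\<^sub>R y t + sin t *\<^sub>R A (y t)))) (at t)"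
      unfolding h_def
      by (intro has_vector_derivative_scaleR has_vector_derivative_add e yd Ay DERIV_cos DERIV_sin)
    moreover have "A (y t - A (y t)) = A (y t) + y t" using linA AA by (simp add: linear_diff)
    ultimately show ?thesis by (simp add: algebra_simps)
  qed
  have "h t = h 0"
    using has_vector_derivative_zero_constant[of UNIV h] hd by (metis convex_UNIV UNIV_I has_vector_derivative_at_within)
  then show ?thesis by (simp add: h_def)
qed

lemma theorem3_sub:
  fixes \<Omega> :: "'a::euclidean_space \<Rightarrow> 'a \<Rightarrow> real" and A :: "'a \<Rightarrow> 'a"
  assumes symp: "symplectic_form \<Omega>"
    and linA: "linear A"
    and compat: "\<forall>x y. \<Omega> (A x) y + \<Omega> x (A y) = 0"
    and AA: "\<forall>x. A (A x) = - x"
    and gA: "g \<in> Aut (theta_A \<Omega> A)"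
  shows "g \<in> Sp \<Omega> \<and> g \<circ> A = A \<circ> g"
proof -
  have bl: "bilinear \<Omega>" using symp by (simp add: symplectic_form_def)
  have bb: "bounded_bilinear \<Omega>" using bl by (simp add: bilinear_conv_bounded_bilinear)
  have nondeg: "\<And>x. (\<forall>y. \<Omega> x y = 0) \<Longrightarrow> x = 0" using symp by (simp add: symplectic_form_def)
  have blA: "bounded_linear A" using linA by (simp add: linear_conv_bounded_linear)
  have diffeo: "diffeomorphism g" and pb: "pullback g (theta_A \<Omega> A) = theta_A \<Omega> A"
    using gA by (auto simp: Aut_def)
  have bg: "bij g" and sm: "smooth g" using diffeo by (auto simp: diffeomorphism_def)
  define D where "D x = frechet_derivative g (at x)" for x
  have gd: "(g has_derivative D x) (at x)" for x
    using smooth_D[OF sm] unfolding D_def by (simp add: frechet_derivative_works)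
  have linD: "linear (D x)" for x using gd[of x] has_derivative_linear by blast
  have smD: "smooth (\<lambda>x. D x v)" for v using smooth_D[OF sm] unfolding D_def by blast
  define H where "H x v = frechet_derivative (\<lambda>x. D x v) (at x)" for x v
  have Hd: "((\<lambda>x. D x v) has_derivative H x v) (at x)" for x v
    using smooth_D[OF smD[of v]] unfolding H_def by (simp add: frechet_derivative_works)
  have Hc: "continuous_on UNIV (\<lambda>x. H x v u)" for v u
  proof -
    have "smooth (\<lambda>x. H x v u)" using smooth_D[OF smD[of v]] unfolding H_def by blast
    then have "(\<lambda>x. H x v u) differentiable at x" for x
      using smooth_D by blast
    then show ?thesis
      by (simp add: continuous_at_imp_continuous_on differentiable_imp_continuous_within)
  qed
  have Hsym: "H z v u = H z u v" for z u v
  proof -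
    have "e \<bullet> H z v u = e \<bullet> H z u v" for e
    proof -
      have d1: "((\<lambda>x. e \<bullet> g x) has_derivative (\<lambda>w. e \<bullet> D x w)) (at x)" for x
        by (rule bounded_linear.has_derivative[OF bounded_linear_inner_right gd])
      have d2: "((\<lambda>x. e \<bullet> D x w) has_derivative (\<lambda>u. e \<bullet> H x w u)) (at x)" for x w
        by (rule bounded_linear.has_derivative[OF bounded_linear_inner_right Hd])
      have c: "continuous_on UNIV (\<lambda>x. e \<bullet> H x w u)" for w u
        by (intro continuous_intros Hc)
      show ?thesis using mixed_sym[of "\<lambda>x. e \<bullet> g x" "\<lambda>x w. e \<bullet> D x w" "\<lambda>x w u. e \<bullet> H x w u", OF d1 d2 c, of z v u]
        by simp
    qed
    then have "(H z v u - H z u v) \<bullet> (H z v u - H z u v) = 0" by (simp add: inner_diff_right)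
    then show ?thesis by simp
  qed
  have C: "\<Omega> (g z - A (g z)) (D z v) = \<Omega> (z - A z) v" for z v
  proof -
    have "pullback g (theta_A \<Omega> A) z v = theta_A \<Omega> A z v" using pb by simp
    then show ?thesis unfolding pullback_def theta_A_def D_def by simp
  qed
  have E: "\<Omega> (g z - A (g z)) (H z v u) + \<Omega> (D z u - A (D z u)) (D z v) = \<Omega> (u - A u) v" for z u v
  proof -
    have dB: "((\<lambda>z. g z - A (g z)) has_derivative (\<lambda>u. D z u - A (D z u))) (at z)"
      by (rule has_derivative_diff[OF gd bounded_linear.has_derivative[OF blA gd]])
    have dL: "((\<lambda>z. \<Omega> (g z - A (g z)) (D z v)) has_derivative
       (\<lambda>u. \<Omega> (g z - A (g z)) (H z v u) + \<Omega> (D z u - A (D z u)) (D z v))) (at z)"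
      by (rule bounded_bilinear.FDERIV[OF bb dB Hd])
    have dI: "((\<lambda>z. z - A z) has_derivative (\<lambda>u. u - A u)) (at z)"
      by (rule has_derivative_diff[OF has_derivative_ident bounded_linear.has_derivative[OF blA has_derivative_ident]])
    have dR: "((\<lambda>z. \<Omega> (z - A z) v) has_derivative (\<lambda>u. \<Omega> (z - A z) 0 + \<Omega> (u - A u) v)) (at z)"
      by (rule bounded_bilinear.FDERIV[OF bb dI has_derivative_const])
    have eqf: "(\<lambda>z. \<Omega> (g z - A (g z)) (D z v)) = (\<lambda>z. \<Omega> (z - A z) v)" by (rule ext) (rule C)
    have dR': "((\<lambda>z. \<Omega> (g z - A (g z)) (D z v)) has_derivative (\<lambda>u. \<Omega> (z - A z) 0 + \<Omega> (u - A u) v)) (at z)"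
      unfolding eqf by (rule dR)
    have "(\<lambda>u. \<Omega> (g z - A (g z)) (H z v u) + \<Omega> (D z u - A (D z u)) (D z v)) = (\<lambda>u. \<Omega> (z - A z) 0 + \<Omega> (u - A u) v)"
      using has_derivative_unique[OF dL dR'] .
    from fun_cong[OF this, of u] show ?thesis by (simp add: bilinear_rzero[OF bl])
  qed
  have Ds: "\<Omega> (D z u) (D z v) = \<Omega> u v" for z u v
  proof -
    have "\<Omega> (D z u - A (D z u)) (D z v) - \<Omega> (D z v - A (D z v)) (D z u) = \<Omega> (u - A u) v - \<Omega> (v - A v) u"
    proof -
      have "\<Omega> (g z - A (g z)) (H z u v) = \<Omega> (g z - A (g z)) (H z v u)" using Hsym by metis
      then show ?thesis using E[of z u v] E[of z v u] by linarith
    qed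
    then show ?thesis using omega_facts[OF symp linA compat] by simp
  qed
  have injD: "inj (D z)" for z
  proof -
    have "D z u = 0 \<Longrightarrow> u = 0" for u
    proof -
      assume "D z u = 0"
      then have "\<forall>v. \<Omega> u v = 0" using Ds[of z u] bl by (metis bilinear_lzero)
      then show "u = 0" using nondeg by blast
    qed
    then show ?thesis using linD[of z] by (simp add: linear_injective_0)
  qed
  have surjD: "surj (D z)" for z using linD injD by (simp add: linear_injective_imp_surjective)
  have DB: "D z (z - A z) = g z - A (g z)" for z
  proof -
    have "\<Omega> (D z (z - A z) - (g z - A (g z))) y = 0" for y
    proof -
      obtain w where w: "y = D z w" using surjD[of z] by (auto simp: surj_def)
      show ?thesis unfolding w using bl Ds[of z "z - A z" w] C[of z w] by (simp add: bilinear_lsub)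
    qed
    then have "D z (z - A z) - (g z - A (g z)) = 0" using nondeg by blast
    then show ?thesis by simp
  qed
  have g0: "g 0 = 0"
  proof -
    have "D 0 (0 - A 0) = g 0 - A (g 0)" by (rule DB)
    then have "A (g 0) = g 0" using linD[of 0] linA by (simp add: linear_0)
    then have "A (A (g 0)) = g 0" by simp
    moreover have "A (A (g 0)) = - g 0" using AA by blast
    ultimately have "g 0 = - g 0" by simp
    then have "g 0 + g 0 = 0" by (metis add.right_inverse)
    then have "(2::real) *\<^sub>R g 0 = 0" by (simp add: scaleR_2)
    then show ?thesis by simp
  qed
  have homog: "g (exp (-(2*pi*real n)) *\<^sub>R z) = exp (-(2*pi*real n)) *\<^sub>R g z" for z n
  proof -
    define P where "P t = exp t *\<^sub>R (cos t *\<^sub>R z - sin t *\<^sub>R A z)" for t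
    have Pd: "(P has_vector_derivative (P t - A (P t))) (at t)" for t
      unfolding P_def by (rule P_vderiv[OF linA AA])
    have yd: "((\<lambda>t. g (P t)) has_vector_derivative (g (P t) - A (g (P t)))) (at t)" for t
    proof -
      have "((g \<circ> P) has_vector_derivative D (P t) (P t - A (P t))) (at t)"
        by (rule vector_derivative_diff_chain_within[OF Pd has_derivative_at_withinI[OF gd]])
      then show ?thesis using DB[of "P t"] by (simp add: o_def)
    qed
    have fc: "exp (- t) *\<^sub>R (cos t *\<^sub>R g (P t) + sin t *\<^sub>R A (g (P t))) = g (P 0)" for t
      using flow_const[OF linA AA yd] by simp
    have c: "cos (-(2*pi*real n)) = 1" using cos_int_2pin[of "int n"] by simp
    have sn: "sin (-(2*pi*real n)) = 0" using sin_int_2pin[of "int n"] by simp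
    have "exp (2*pi*real n) *\<^sub>R g (exp (-(2*pi*real n)) *\<^sub>R z) = g z"
      using fc[of "-(2*pi*real n)"] c sn by (simp add: P_def)
    then have "exp (-(2*pi*real n)) *\<^sub>R (exp (2*pi*real n) *\<^sub>R g (exp (-(2*pi*real n)) *\<^sub>R z)) = exp (-(2*pi*real n)) *\<^sub>R g z"
      by simp
    then show ?thesis by (simp add: exp_minus_inverse exp_minus)
  qed
  define L where "L = D 0"
  have gL: "g z = L z" for z
  proof (rule ccontr)
    assume ne: "g z \<noteq> L z"
    define err where "err = g z - L z"
    have errne: "err \<noteq> 0" using ne by (simp add: err_def)
    have zne: "z \<noteq> 0" using ne g0 linD[of 0] by (auto simp: L_def linear_0)
    define e where "e = norm err / (2 * norm z)"
    have epos: "e > 0" using errne zne by (simp add: e_def)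
    obtain d where d: "d > 0" "\<And>y. norm (y - 0) < d \<Longrightarrow> norm (g y - g 0 - L (y - 0)) \<le> e * norm (y - 0)"
      using gd[of 0, unfolded has_derivative_at_alt] epos unfolding L_def by blast
    obtain n :: nat where n: "norm z / d < real n" using reals_Archimedean2 by blast
    define s where "s = exp (-(2*pi*real n))"
    have spos: "s > 0" by (simp add: s_def)
    have "1 * real n \<le> (2*pi) * real n"
      by (rule mult_right_mono) (use pi_gt3 in auto)
    then have "real n \<le> 2*pi*real n" by simp
    moreover have "1 + 2*pi*real n \<le> exp (2*pi*real n)" by (rule exp_ge_add_one_self)
    ultimately have "real n < exp (2*pi*real n)" by linarith
    then have "d * real n < d * exp (2*pi*real n)" using d(1) by simp
    moreover have "norm z < d * real n" using n d(1) by (simp add: field_simps)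
    ultimately have "norm z < d * exp (2*pi*real n)" by linarith
    then have "s * norm z < d" by (simp add: s_def exp_minus field_simps)
    then have "norm (g (s *\<^sub>R z) - g 0 - L (s *\<^sub>R z - 0)) \<le> e * norm (s *\<^sub>R z - 0)"
      using d(2)[of "s *\<^sub>R z"] spos by simp
    moreover have "g (s *\<^sub>R z) - g 0 - L (s *\<^sub>R z - 0) = s *\<^sub>R err"
      using homog[of n z] g0 linD[of 0] unfolding s_def err_def L_def by (simp add: linear_scale scaleR_diff_right)
    ultimately have "s * norm err \<le> e * (s * norm z)" using spos by simp
    then have "norm err \<le> e * norm z" using spos by (simp add: mult.left_commute)
    then show False using errne zne by (simp add: e_def)
  qed
  have geq: "g = L" using gL by auto
  have linL: "linear L" unfolding L_def by (rule linD)
  have Dg: "D z = g" for z unfolding D_def geq by (rule fd_linear[OF linL])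
  have "\<Omega> (g x) (g y) = \<Omega> x y" for x y using Ds[of 0 x y] Dg[of 0] by simp
  then have "g \<in> Sp \<Omega>" unfolding Sp_def using bg linL geq by blast
  moreover have "g \<circ> A = A \<circ> g"
  proof
    fix z
    have "g (z - A z) = g z - A (g z)" using DB[of z] Dg by simp
    then show "(g \<circ> A) z = (A \<circ> g) z" using linL geq by (simp add: linear_diff)
  qed
  ultimately show ?thesis by blast
qed

theorem theorem3:
  fixes \<Omega> :: "'a::euclidean_space \<Rightarrow> 'a \<Rightarrow> real" and A :: "'a \<Rightarrow> 'a"
  assumes "symplectic_form \<Omega>"
    and "linear A"
    and "\<forall>x y. \<Omega> (A x) y + \<Omega> x (A y) = 0"
    and "\<forall>x. A (A x) = - x"
  shows "Aut (theta_A \<Omega> A) = {g \<in> Sp \<Omega>. g \<circ> A = A \<circ> g}"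
proof
  show "Aut (theta_A \<Omega> A) \<subseteq> {g \<in> Sp \<Omega>. g \<circ> A = A \<circ> g}"
    using theorem3_sub[OF assms] by blast
  show "{g \<in> Sp \<Omega>. g \<circ> A = A \<circ> g} \<subseteq> Aut (theta_A \<Omega> A)"
    using theorem3_sup[OF assms(1,2)] by blast
qed

end
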